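(* Let $n\ge 1$ and let $\|\cdot\|$ be a norm on $\mathbb{R}^n$ that is $C^\infty$ on $\mathbb{R}^n\setminus\{0\}$. Let $G^n$ be the group (under composition) of all $C^\infty$ diffeomorphisms $\mathbf{Y}:\mathbb{R}^n\setminus\{0\}\to\mathbb{R}^n\setminus\{0\}$ with $\mathbf{Y}(\lambda\mathbf{x})=\lambda\mathbf{Y}(\mathbf{x})$ for all $\mathbf{x}\ne0$, $\lambda\in\mathbb{R}\setminus\{0\}$, with product $\mathbf{Y}_{g_1g_2}=\mathbf{Y}_{g_1}\circ\mathbf{Y}_{g_2}$. Let $N^n\subset G^n$ consist of the elements with $\mathbf{Y}_g(\mathbf{x})=\mathbf{x}\,r_g(\mathbf{x})$ for a $C^\infty$ function $r_g:\mathbb{R}^n\setminus\{0\}\to(0,\infty)$ satisfying $r_g(\lambda\mathbf{x})=r_g(\mathbf{x})$ for all $\lambda\in\mathbb{R}\setminus\{0\}$. Let $H^n\subset G^n$ be the subgroup of elements $h$ with $\|\mathbf{Y}_h(\mathbf{x})\|=\|\mathbf{x}\|$ and $\mathbf{Y}_h(-\mathbf{x})=-\mathbf{Y}_h(\mathbf{x})$ for all $\mathbf{x}\ne 0$. Then every $g\in G^n$ has a unique representation $g=h\,g_N$ with $h\in H^n$ and $g_N\in N^n$, i.e. $\mathbf{Y}_g=\mathbf{Y}_h\circ\mathbf{Y}_{g_N}$.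
   Context: $G^n$ is the group of Thermodynamic Coordinate Transformations (homogeneous degree-one diffeomorphisms of $\mathbb{R}^n\setminus\{0\}$); elements are identified with their maps and the group law is composition. *)

theory Defs
  imports "HOL-Analysis.Analysis"
begin

text \<open>C-infinity real-valued functions on an (open) set S of R^n: continuous, and every
  first-order partial derivative exists at every point of S and is again C-infinity
  (coinductively, i.e. partial derivatives of all orders exist and are continuous).\<close>
coinductive smooth_on :: "(real ^ 'n) set \<Rightarrow> (real ^ 'n \<Rightarrow> real) \<Rightarrow> bool" where
  "continuous_on S g \<Longrightarrow>
   (\<forall>i. \<exists>g'. (\<forall>x\<in>S. ((\<lambda>t. g (x + t *\<^sub>R axis i 1)) has_real_derivative g' x) (at 0))
             \<and> smooth_on S g') \<Longrightarrow> smooth_on S g"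

definition smooth_map_on :: "(real ^ 'n) set \<Rightarrow> (real ^ 'n \<Rightarrow> real ^ 'm) \<Rightarrow> bool" where
  "smooth_map_on S Y \<longleftrightarrow> (\<forall>j. smooth_on S (\<lambda>x. Y x $ j))"

abbreviation punct :: "(real ^ 'n) set" where
  "punct \<equiv> UNIV - {0}"

definition is_norm :: "(real ^ 'n \<Rightarrow> real) \<Rightarrow> bool" where
  "is_norm nrm \<longleftrightarrow> (\<forall>x. nrm x = 0 \<longleftrightarrow> x = 0) \<and> (\<forall>x y. nrm (x + y) \<le> nrm x + nrm y)
     \<and> (\<forall>c x. nrm (c *\<^sub>R x) = \<bar>c\<bar> * nrm x)"

text \<open>Convention: maps are
  extended by Y 0 = 0 so that elements are identified with total functions.\<close>
definition TCT :: "(real ^ 'n \<Rightarrow> real ^ 'n) set" where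
  "TCT = {Y. Y 0 = 0 \<and> bij_betw Y punct punct \<and> smooth_map_on punct Y
             \<and> smooth_map_on punct (inv_into punct Y)
             \<and> (\<forall>x lam. x \<noteq> 0 \<longrightarrow> lam \<noteq> 0 \<longrightarrow> Y (lam *\<^sub>R x) = lam *\<^sub>R Y x)}"

definition TCT_N :: "(real ^ 'n \<Rightarrow> real ^ 'n) set" where
  "TCT_N = {Y \<in> TCT. \<exists>r. smooth_on punct r \<and> (\<forall>x. x \<noteq> 0 \<longrightarrow> r x > 0)
             \<and> (\<forall>x lam. x \<noteq> 0 \<longrightarrow> lam \<noteq> 0 \<longrightarrow> r (lam *\<^sub>R x) = r x)
             \<and> (\<forall>x. x \<noteq> 0 \<longrightarrow> Y x = r x *\<^sub>R x)}"

definition TCT_H :: "(real ^ 'n \<Rightarrow> real) \<Rightarrow> (real ^ 'n \<Rightarrow> real ^ 'n) set" where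
  "TCT_H nrm = {Y \<in> TCT. \<forall>x. x \<noteq> 0 \<longrightarrow> nrm (Y x) = nrm x \<and> Y (- x) = - Y x}"

end

theory Submission
  imports Defs
begin

lemma smooth_onD:
  assumes "smooth_on S g"
  shows "continuous_on S g \<and> (\<forall>i. \<exists>g'. (\<forall>x\<in>S. ((\<lambda>t. g (x + t *\<^sub>R axis i 1)) has_real_derivative g' x) (at 0)) \<and> smooth_on S g')"
  using assms by (cases rule: smooth_on.cases) auto

lemma c1_diff_aux:
  fixes f :: "real^'m \<Rightarrow> real"
  assumes T: "open T" and y: "y \<in> T"
    and pd: "\<And>j z. z \<in> T \<Longrightarrow> ((\<lambda>t. f (z + t *\<^sub>R axis j 1)) has_real_derivative D j z) (at 0)"
    and cont: "\<And>j. continuous_on T (D j)"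
    and K: "finite K"
  shows "\<forall>e>0. \<exists>d>0. \<forall>h. norm h < d \<longrightarrow> (\<forall>j. j \<notin> K \<longrightarrow> h$j = 0) \<longrightarrow>
           \<bar>f (y + h) - f y - (\<Sum>j\<in>K. h$j * D j y)\<bar> \<le> e * norm h"
  using K
proof (induction K rule: finite_induct)
  case empty
  show ?case
  proof (intro allI impI)
    fix e :: real assume "e > 0"
    show "\<exists>d>0. \<forall>h. norm h < d \<longrightarrow> (\<forall>j. j \<notin> {} \<longrightarrow> h$j = 0) \<longrightarrow>
           \<bar>f (y + h) - f y - (\<Sum>j\<in>{}. h$j * D j y)\<bar> \<le> e * norm h"
    proof (intro exI[of _ 1] conjI allI impI)
      fix h :: "real^'m" assume "\<forall>j. j \<notin> {} \<longrightarrow> h$j = 0"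
      then have "h = 0" by (simp add: vec_eq_iff)
      then show "\<bar>f (y + h) - f y - (\<Sum>j\<in>{}. h$j * D j y)\<bar> \<le> e * norm h" by simp
    qed simp
  qed
next
  case (insert k K)
  show ?case
  proof (intro allI impI)
    fix e :: real assume e: "e > 0"
    obtain d2 where d2: "d2 > 0" and d2h: "\<And>h. norm h < d2 \<Longrightarrow> (\<forall>j. j \<notin> K \<longrightarrow> h$j = 0) \<Longrightarrow>
           \<bar>f (y + h) - f y - (\<Sum>j\<in>K. h$j * D j y)\<bar> \<le> (e/2) * norm h"
      using insert.IH e by (meson half_gt_zero)
    obtain d0 where d0: "d0 > 0" and d0T: "ball y d0 \<subseteq> T"
      using T y open_contains_ball by blast
    have "continuous (at y) (D k)"
      using cont T y continuous_on_eq_continuous_at by blast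
    then obtain d1 where d1: "d1 > 0" and d1h: "\<And>w. dist w y < d1 \<Longrightarrow> dist (D k w) (D k y) < e/2"
      unfolding continuous_at_eps_delta using e by (meson half_gt_zero)
    define d where "d = min d0 (min d1 d2)"
    have d: "d > 0" using d0 d1 d2 by (simp add: d_def)
    show "\<exists>d>0. \<forall>h. norm h < d \<longrightarrow> (\<forall>j. j \<notin> insert k K \<longrightarrow> h$j = 0) \<longrightarrow>
           \<bar>f (y + h) - f y - (\<Sum>j\<in>insert k K. h$j * D j y)\<bar> \<le> e * norm h"
    proof (intro exI[of _ d] conjI allI impI d)
      fix h :: "real^'m"
      assume hd: "norm h < d" and hs: "\<forall>j. j \<notin> insert k K \<longrightarrow> h$j = 0"
      define h' where "h' = h - (h$k) *\<^sub>R axis k 1"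
      have h'c: "h' $ j = (if j = k then 0 else h $ j)" for j
        by (simp add: h'_def axis_def)
      have h'n: "norm h' \<le> norm h"
        by (rule norm_le_componentwise_cart) (simp add: h'c)
      have h's: "\<forall>j. j \<notin> K \<longrightarrow> h'$j = 0" using hs by (simp add: h'c)
      have IH: "\<bar>f (y + h') - f y - (\<Sum>j\<in>K. h'$j * D j y)\<bar> \<le> (e/2) * norm h'"
        using d2h[OF _ h's] h'n hd by (simp add: d_def)
      have sumeq: "(\<Sum>j\<in>K. h'$j * D j y) = (\<Sum>j\<in>K. h$j * D j y)"
        using insert.hyps by (intro sum.cong) (auto simp: h'c)
      define \<psi> where "\<psi> s = f (y + h' + s *\<^sub>R axis k 1) - s * D k y" for s
      have wn: "norm (h' + s *\<^sub>R axis k 1) \<le> norm h" if "\<bar>s\<bar> \<le> \<bar>h$k\<bar>" for s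
        by (rule norm_le_componentwise_cart) (use that in \<open>auto simp: h'c axis_def\<close>)
      have der: "(\<psi> has_derivative (\<lambda>u. u * (D k (y + h' + s *\<^sub>R axis k 1) - D k y))) (at s within closed_segment 0 (h$k))"
        if s: "s \<in> closed_segment 0 (h$k)" for s
      proof -
        have sb: "\<bar>s\<bar> \<le> \<bar>h$k\<bar>" using s by (auto simp: closed_segment_eq_real_ivl split: if_splits)
        let ?w = "y + h' + s *\<^sub>R axis k 1"
        have "dist ?w y < d" using wn[OF sb] hd by (simp add: dist_norm add.assoc)
        then have wT: "?w \<in> T" using d0T by (auto simp: d_def dist_commute)
        have "((\<lambda>t. f (?w + t *\<^sub>R axis k 1)) has_real_derivative D k ?w) (at 0)" using pd[OF wT] .
        moreover have "(\<lambda>t. f (?w + t *\<^sub>R axis k 1)) = (\<lambda>t. f (y + h' + (t + s) *\<^sub>R axis k 1))"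
          by (simp add: scaleR_add_left algebra_simps)
        ultimately have "((\<lambda>t. f (y + h' + t *\<^sub>R axis k 1)) has_real_derivative D k ?w) (at (0 + s))"
          using DERIV_shift[of "\<lambda>t. f (y + h' + t *\<^sub>R axis k 1)" "D k ?w" 0 s] by simp
        then have "(\<psi> has_real_derivative (D k ?w - D k y)) (at s)"
          unfolding \<psi>_def by (auto intro!: derivative_eq_intros)
        moreover have "(\<lambda>u. u * (D k ?w - D k y)) = (*) (D k ?w - D k y)" by (auto simp: mult.commute)
        ultimately show ?thesis
          by (auto simp: has_field_derivative_def intro: has_derivative_at_withinI)
      qed
      have bnd: "onorm (\<lambda>u. u * (D k (y + h' + s *\<^sub>R axis k 1) - D k y)) \<le> e/2"
        if s: "s \<in> closed_segment 0 (h$k)" for s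
      proof -
        have sb: "\<bar>s\<bar> \<le> \<bar>h$k\<bar>" using s by (auto simp: closed_segment_eq_real_ivl split: if_splits)
        have "dist (y + h' + s *\<^sub>R axis k 1) y < d1" using wn[OF sb] hd by (simp add: dist_norm add.assoc d_def)
        then have "\<bar>D k (y + h' + s *\<^sub>R axis k 1) - D k y\<bar> < e/2" using d1h dist_real_def by metis
        moreover have "onorm (\<lambda>u::real. u * (D k (y + h' + s *\<^sub>R axis k 1) - D k y)) = \<bar>D k (y + h' + s *\<^sub>R axis k 1) - D k y\<bar>"
          using onorm_scaleR_left[of "\<lambda>u::real. u" "D k (y + h' + s *\<^sub>R axis k 1) - D k y"]
          by (simp add: onorm_id bounded_linear_ident)
        ultimately show ?thesis by simp
      qed
      have "norm (\<psi> (h$k) - \<psi> 0) \<le> e/2 * norm (h$k - 0)"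
        by (rule differentiable_bound[OF convex_closed_segment der bnd]) auto
      then have mvt: "\<bar>f (y + h) - f (y + h') - h$k * D k y\<bar> \<le> e/2 * \<bar>h$k\<bar>"
        by (simp add: \<psi>_def h'_def algebra_simps)
      have "\<bar>h$k\<bar> \<le> norm h" by (rule component_le_norm_cart)
      have "\<bar>f (y + h) - f y - (\<Sum>j\<in>insert k K. h$j * D j y)\<bar>
          = \<bar>(f (y + h) - f (y + h') - h$k * D k y) + (f (y + h') - f y - (\<Sum>j\<in>K. h'$j * D j y))\<bar>"
        using insert.hyps sumeq by simp
      also have "\<dots> \<le> e/2 * \<bar>h$k\<bar> + e/2 * norm h'"
        using mvt IH by linarith
      also have "\<dots> \<le> e/2 * norm h + e/2 * norm h"
        using \<open>\<bar>h$k\<bar> \<le> norm h\<close> h'n e by (intro add_mono mult_left_mono) auto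
      finally show "\<bar>f (y + h) - f y - (\<Sum>j\<in>insert k K. h$j * D j y)\<bar> \<le> e * norm h" by simp
    qed
  qed
qed

lemma c1_diff:
  fixes f :: "real^'m \<Rightarrow> real"
  assumes T: "open T" and y: "y \<in> T"
    and pd: "\<And>j z. z \<in> T \<Longrightarrow> ((\<lambda>t. f (z + t *\<^sub>R axis j 1)) has_real_derivative D j z) (at 0)"
    and cont: "\<And>j. continuous_on T (D j)"
  shows "(f has_derivative (\<lambda>v. \<Sum>j\<in>UNIV. v$j * D j y)) (at y)"
  unfolding has_derivative_at_alt
proof (intro conjI allI impI)
  show "bounded_linear (\<lambda>v. \<Sum>j\<in>UNIV. v$j * D j y)"
    by (intro bounded_linear_sum bounded_linear_compose[OF bounded_linear_mult_left bounded_linear_vec_nth])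
next
  fix e :: real assume "e > 0"
  then obtain d where "d > 0" and dh: "\<And>h. norm h < d \<Longrightarrow> \<bar>f (y + h) - f y - (\<Sum>j\<in>UNIV. h$j * D j y)\<bar> \<le> e * norm h"
    using c1_diff_aux[OF T y pd cont, of UNIV] by auto
  show "\<exists>d>0. \<forall>y'. norm (y' - y) < d \<longrightarrow> norm (f y' - f y - (\<Sum>j\<in>UNIV. (y' - y)$j * D j y)) \<le> e * norm (y' - y)"
    using dh[of "_ - y"] \<open>d > 0\<close> by (intro exI[of _ d]) auto
qed

lemma chain_partial:
  fixes f :: "real^'m \<Rightarrow> real" and Y :: "real^'n \<Rightarrow> real^'m"
  assumes fd: "(f has_derivative (\<lambda>v. \<Sum>j\<in>UNIV. v$j * Df j)) (at (Y x))"
    and Yd: "\<And>j. ((\<lambda>t. Y (x + t *\<^sub>R axis i 1) $ j) has_real_derivative DY j) (at 0)"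
  shows "((\<lambda>t. f (Y (x + t *\<^sub>R axis i 1))) has_real_derivative (\<Sum>j\<in>UNIV. DY j * Df j)) (at 0)"
proof -
  let ?c = "\<lambda>t. Y (x + t *\<^sub>R axis i 1)"
  have cd: "(?c has_derivative (\<lambda>t. t *\<^sub>R (\<chi> j. DY j))) (at 0)"
  proof -
    have "((\<lambda>t. ?c t \<bullet> b) has_derivative (\<lambda>t. (t *\<^sub>R (\<chi> j. DY j)) \<bullet> b)) (at 0)" if "b \<in> Basis" for b
    proof -
      from that obtain j where b: "b = axis j 1" by (auto simp: Basis_vec_def)
      have "((\<lambda>t. ?c t $ j) has_derivative (\<lambda>t. DY j * t)) (at 0)"
        using Yd[of j] by (simp add: has_field_derivative_def)
      moreover have "(\<lambda>t. DY j * t) = (\<lambda>t. (t *\<^sub>R (\<chi> j. DY j)) \<bullet> b)"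
        by (auto simp: b inner_axis)
      ultimately show ?thesis by (simp add: b inner_axis)
    qed
    then show ?thesis
      using has_derivative_componentwise_within[of ?c _ 0 UNIV] by auto
  qed
  have "?c 0 = Y x" by simp
  then have fd': "(f has_derivative (\<lambda>v. \<Sum>j\<in>UNIV. v$j * Df j)) (at (?c 0))" using fd by simp
  have "((\<lambda>t. f (?c t)) has_derivative (\<lambda>t. \<Sum>j\<in>UNIV. (t *\<^sub>R (\<chi> j. DY j))$j * Df j)) (at 0)"
    using diff_chain_at[OF cd fd'] by (simp add: o_def)
  moreover have "(\<lambda>t. \<Sum>j\<in>UNIV. (t *\<^sub>R (\<chi> j. DY j))$j * Df j) = (*) (\<Sum>j\<in>UNIV. DY j * Df j)"
    by (auto simp: sum_distrib_left algebra_simps)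
  ultimately show ?thesis by (simp add: has_field_derivative_def)
qed


lemma smooth_const: "smooth_on S (\<lambda>x. c)"
proof (coinduction arbitrary: c rule: smooth_on.coinduct)
  case smooth_on
  then show ?case by (auto intro!: exI[of _ "\<lambda>x. 0"])
qed

lemma smooth_coord: "smooth_on S (\<lambda>x. x $ j)"
proof (rule smooth_on.intros)
  show "continuous_on S (\<lambda>x. x $ j)" by (intro continuous_intros)
  show "\<forall>i. \<exists>g'. (\<forall>x\<in>S. ((\<lambda>t. (x + t *\<^sub>R axis i 1) $ j) has_real_derivative g' x) (at 0)) \<and> smooth_on S g'"
  proof
    fix i
    show "\<exists>g'. (\<forall>x\<in>S. ((\<lambda>t. (x + t *\<^sub>R axis i 1) $ j) has_real_derivative g' x) (at 0)) \<and> smooth_on S g'"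
      by (intro exI[of _ "\<lambda>x. axis i 1 $ j"] conjI ballI smooth_const)
         (auto intro!: derivative_eq_intros)
  qed
qed

lemma smooth_cong:
  assumes S: "open S" and g: "smooth_on S g" and eq: "\<And>x. x \<in> S \<Longrightarrow> g x = h x"
  shows "smooth_on S h"
proof (rule smooth_on.intros)
  show "continuous_on S h" using smooth_onD[OF g] eq continuous_on_cong by blast
  show "\<forall>i. \<exists>g'. (\<forall>x\<in>S. ((\<lambda>t. h (x + t *\<^sub>R axis i 1)) has_real_derivative g' x) (at 0)) \<and> smooth_on S g'"
  proof
    fix i
    obtain g' where g': "\<forall>x\<in>S. ((\<lambda>t. g (x + t *\<^sub>R axis i 1)) has_real_derivative g' x) (at 0)" "smooth_on S g'"
      using smooth_onD[OF g] by blast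
    have "((\<lambda>t. h (x + t *\<^sub>R axis i 1)) has_real_derivative g' x) (at 0)" if x: "x \<in> S" for x
    proof (rule has_field_derivative_transform_within_open[OF g'(1)[rule_format, OF x]])
      show "open ((\<lambda>t. x + t *\<^sub>R axis i 1) -` S)"
        by (intro continuous_open_vimage S) (intro continuous_intros)
      show "0 \<in> (\<lambda>t. x + t *\<^sub>R axis i 1) -` S" using x by simp
      show "\<And>t. t \<in> (\<lambda>t. x + t *\<^sub>R axis i 1) -` S \<Longrightarrow> g (x + t *\<^sub>R axis i 1) = h (x + t *\<^sub>R axis i 1)"
        using eq by simp
    qed
    then show "\<exists>g'. (\<forall>x\<in>S. ((\<lambda>t. h (x + t *\<^sub>R axis i 1)) has_real_derivative g' x) (at 0)) \<and> smooth_on S g'"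
      using g'(2) by blast
  qed
qed


inductive alg :: "(real^'n) set \<Rightarrow> (real^'m) set \<Rightarrow> (real^'n \<Rightarrow> real^'m) \<Rightarrow> (real^'n \<Rightarrow> real) \<Rightarrow> bool"
  for S T Y where
  base: "smooth_on S g \<Longrightarrow> alg S T Y g"
| comp: "smooth_on T f \<Longrightarrow> alg S T Y (\<lambda>x. f (Y x))"
| add: "alg S T Y g \<Longrightarrow> alg S T Y h \<Longrightarrow> alg S T Y (\<lambda>x. g x + h x)"
| mult: "alg S T Y g \<Longrightarrow> alg S T Y h \<Longrightarrow> alg S T Y (\<lambda>x. g x * h x)"
| inv: "alg S T Y g \<Longrightarrow> (\<forall>x\<in>S. g x \<noteq> 0) \<Longrightarrow> alg S T Y (\<lambda>x. inverse (g x))"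

lemma alg_sum:
  assumes "finite I" "\<And>i. i \<in> I \<Longrightarrow> alg S T Y (G i)"
  shows "alg S T Y (\<lambda>x. \<Sum>i\<in>I. G i x)"
  using assms
proof (induction I rule: finite_induct)
  case empty
  then show ?case using alg.base[OF smooth_const[of S 0]] by simp
next
  case (insert a I)
  then show ?case using alg.add[of S T Y "G a" "\<lambda>x. \<Sum>i\<in>I. G i x"] by simp
qed


lemma alg_sound_aux:
  fixes Y :: "real^'n \<Rightarrow> real^'m"
  assumes T: "open T" and YT: "\<And>x. x \<in> S \<Longrightarrow> Y x \<in> T"
    and Ys: "\<And>j. smooth_on S (\<lambda>x. Y x $ j)"
    and a: "alg S T Y g"
  shows "continuous_on S g \<and> (\<forall>i. \<exists>g'. (\<forall>x\<in>S. ((\<lambda>t. g (x + t *\<^sub>R axis i 1)) has_real_derivative g' x) (at 0)) \<and> alg S T Y g')"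
  using a
proof (induction rule: alg.induct)
  case (base g)
  then show ?case using smooth_onD[OF base] alg.base by blast
next
  case (comp f)
  have "\<exists>D. \<forall>j. (\<forall>z\<in>T. ((\<lambda>t. f (z + t *\<^sub>R axis j 1)) has_real_derivative D j z) (at 0)) \<and> smooth_on T (D j)"
    using smooth_onD[OF comp] by (intro choice) blast
  then obtain D where D: "\<And>j. (\<forall>z\<in>T. ((\<lambda>t. f (z + t *\<^sub>R axis j 1)) has_real_derivative D j z) (at 0)) \<and> smooth_on T (D j)"
    by blast
  have "\<forall>j. \<exists>F. \<forall>i. (\<forall>x\<in>S. ((\<lambda>t. Y (x + t *\<^sub>R axis i 1) $ j) has_real_derivative F i x) (at 0)) \<and> smooth_on S (F i)"
  proof
    fix j
    show "\<exists>F. \<forall>i. (\<forall>x\<in>S. ((\<lambda>t. Y (x + t *\<^sub>R axis i 1) $ j) has_real_derivative F i x) (at 0)) \<and> smooth_on S (F i)"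
      using smooth_onD[OF Ys[of j]] by (intro choice) blast
  qed
  then have "\<exists>DY. \<forall>j. \<forall>i. (\<forall>x\<in>S. ((\<lambda>t. Y (x + t *\<^sub>R axis i 1) $ j) has_real_derivative DY j i x) (at 0)) \<and> smooth_on S (DY j i)"
    by (rule choice)
  then obtain DY where DY: "\<And>j i. (\<forall>x\<in>S. ((\<lambda>t. Y (x + t *\<^sub>R axis i 1) $ j) has_real_derivative DY j i x) (at 0)) \<and> smooth_on S (DY j i)"
    by blast
  have Yc: "continuous_on S Y"
  proof -
    have "continuous_on S (\<lambda>x. \<chi> j. Y x $ j)"
      using smooth_onD[OF Ys] by (intro continuous_on_vec_lambda) blast
    then show ?thesis by simp
  qed
  have fc: "continuous_on T f" using smooth_onD[OF comp] by blast
  have cont: "continuous_on S (\<lambda>x. f (Y x))"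
    by (rule continuous_on_compose2[OF fc Yc]) (use YT in auto)
  have Dc: "continuous_on T (D j)" for j using smooth_onD[OF conjunct2[OF D[of j]]] by blast
  show ?case
  proof (intro conjI cont allI)
    fix i
    show "\<exists>g'. (\<forall>x\<in>S. ((\<lambda>t. f (Y (x + t *\<^sub>R axis i 1))) has_real_derivative g' x) (at 0)) \<and> alg S T Y g'"
    proof (intro exI[of _ "\<lambda>x. \<Sum>j\<in>UNIV. DY j i x * D j (Y x)"] conjI ballI)
      fix x assume x: "x \<in> S"
      have fd: "(f has_derivative (\<lambda>v. \<Sum>j\<in>UNIV. v$j * D j (Y x))) (at (Y x))"
        by (rule c1_diff[OF T YT[OF x]]) (use D Dc in blast)+
      show "((\<lambda>t. f (Y (x + t *\<^sub>R axis i 1))) has_real_derivative (\<Sum>j\<in>UNIV. DY j i x * D j (Y x))) (at 0)"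
        by (rule chain_partial[where Y=Y and x=x and Df="\<lambda>j. D j (Y x)", OF fd]) (use DY x in blast)
    next
      show "alg S T Y (\<lambda>x. \<Sum>j\<in>UNIV. DY j i x * D j (Y x))"
      proof (rule alg_sum)
        fix j :: 'm
        show "alg S T Y (\<lambda>x. DY j i x * D j (Y x))"
          by (rule alg.mult[OF alg.base alg.comp]) (use D DY in blast)+
      qed simp
    qed
  qed
next
  case (add g h)
  show ?case
  proof (intro conjI allI)
    have "continuous_on S g" "continuous_on S h" using add.IH by blast+
    then show "continuous_on S (\<lambda>x. g x + h x)" by (intro continuous_intros)
    fix i
    obtain g' h' where g': "\<forall>x\<in>S. ((\<lambda>t. g (x + t *\<^sub>R axis i 1)) has_real_derivative g' x) (at 0)" "alg S T Y g'"
      and h': "\<forall>x\<in>S. ((\<lambda>t. h (x + t *\<^sub>R axis i 1)) has_real_derivative h' x) (at 0)" "alg S T Y h'"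
      using add.IH by blast
    show "\<exists>g''. (\<forall>x\<in>S. ((\<lambda>t. g (x + t *\<^sub>R axis i 1) + h (x + t *\<^sub>R axis i 1)) has_real_derivative g'' x) (at 0)) \<and> alg S T Y g''"
      by (intro exI[of _ "\<lambda>x. g' x + h' x"] conjI ballI alg.add g'(2) h'(2) DERIV_add)
         (use g' h' in auto)
  qed
next
  case (mult g h)
  show ?case
  proof (intro conjI allI)
    have "continuous_on S g" "continuous_on S h" using mult.IH by blast+
    then show "continuous_on S (\<lambda>x. g x * h x)" by (intro continuous_intros)
    fix i
    obtain g' h' where g': "\<forall>x\<in>S. ((\<lambda>t. g (x + t *\<^sub>R axis i 1)) has_real_derivative g' x) (at 0)" "alg S T Y g'"
      and h': "\<forall>x\<in>S. ((\<lambda>t. h (x + t *\<^sub>R axis i 1)) has_real_derivative h' x) (at 0)" "alg S T Y h'"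
      using mult.IH by blast
    have "((\<lambda>t. g (x + t *\<^sub>R axis i 1) * h (x + t *\<^sub>R axis i 1)) has_real_derivative g x * h' x + g' x * h x) (at 0)"
      if x: "x \<in> S" for x
      using DERIV_mult[OF g'(1)[rule_format, OF x] h'(1)[rule_format, OF x]] by (simp add: algebra_simps)
    moreover have "alg S T Y (\<lambda>x. g x * h' x + g' x * h x)"
      by (intro alg.add alg.mult mult.hyps g'(2) h'(2))
    ultimately show "\<exists>g''. (\<forall>x\<in>S. ((\<lambda>t. g (x + t *\<^sub>R axis i 1) * h (x + t *\<^sub>R axis i 1)) has_real_derivative g'' x) (at 0)) \<and> alg S T Y g''"
      by (intro exI[of _ "\<lambda>x. g x * h' x + g' x * h x"] conjI ballI)
  qed
next
  case (inv g)
  show ?case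
  proof (intro conjI allI)
    have "continuous_on S g" using inv.IH by blast
    then show "continuous_on S (\<lambda>x. inverse (g x))" using inv.hyps(2) by (intro continuous_intros) blast+
    fix i
    obtain g' where g': "\<forall>x\<in>S. ((\<lambda>t. g (x + t *\<^sub>R axis i 1)) has_real_derivative g' x) (at 0)" "alg S T Y g'"
      using inv.IH by blast
    have "((\<lambda>t. inverse (g (x + t *\<^sub>R axis i 1))) has_real_derivative (-1) * g' x * inverse (g x) * inverse (g x)) (at 0)"
      if x: "x \<in> S" for x
      using DERIV_inverse_fun[OF g'(1)[rule_format, OF x]] inv.hyps(2) x
      by (simp add: power2_eq_square mult.assoc)
    moreover have "alg S T Y (\<lambda>x. (-1) * g' x * inverse (g x) * inverse (g x))"
      by (intro alg.mult alg.inv alg.base[OF smooth_const] g'(2) inv.hyps)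
    ultimately show "\<exists>g''. (\<forall>x\<in>S. ((\<lambda>t. inverse (g (x + t *\<^sub>R axis i 1))) has_real_derivative g'' x) (at 0)) \<and> alg S T Y g''"
      by (intro exI[of _ "\<lambda>x. (-1) * g' x * inverse (g x) * inverse (g x)"] conjI ballI)
  qed
qed



lemma alg_sound:
  fixes Y :: "real^'n \<Rightarrow> real^'m"
  assumes T: "open T" and YT: "\<And>x. x \<in> S \<Longrightarrow> Y x \<in> T"
    and Ys: "\<And>j. smooth_on S (\<lambda>x. Y x $ j)"
    and a: "alg S T Y g"
  shows "smooth_on S g"
proof -
  define X where "X = (\<lambda>S' g. S' = S \<and> alg S T Y g)"
  have "X S g" using a by (simp add: X_def)
  then show ?thesis
  proof (rule smooth_on.coinduct)
    fix S' g assume "X S' g"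
    then have S': "S' = S" and ag: "alg S T Y g" by (auto simp: X_def)
    note aux = alg_sound_aux[OF T YT Ys ag]
    have all: "\<forall>i. \<exists>g'. (\<forall>x\<in>S. ((\<lambda>t. g (x + t *\<^sub>R axis i 1)) has_real_derivative g' x) (at 0)) \<and> (X S g' \<or> smooth_on S g')"
    proof
      fix i
      obtain g' where g': "\<forall>x\<in>S. ((\<lambda>t. g (x + t *\<^sub>R axis i 1)) has_real_derivative g' x) (at 0)" "alg S T Y g'"
        using aux by blast
      show "\<exists>g'. (\<forall>x\<in>S. ((\<lambda>t. g (x + t *\<^sub>R axis i 1)) has_real_derivative g' x) (at 0)) \<and> (X S g' \<or> smooth_on S g')"
        by (rule exI[of _ g']) (use g' in \<open>simp add: X_def\<close>)
    qed
    have cont: "continuous_on S g" using aux by blast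
    show "\<exists>S'' g''. S' = S'' \<and> g = g'' \<and> continuous_on S'' g'' \<and>
            (\<forall>i. \<exists>g'. (\<forall>x\<in>S''. ((\<lambda>t. g'' (x + t *\<^sub>R axis i 1)) has_real_derivative g' x) (at 0)) \<and>
                 (X S'' g' \<or> smooth_on S'' g'))"
      by (rule exI[of _ S], rule exI[of _ g]) (use S' cont all in blast)
  qed
qed

lemma smooth_comp:
  fixes Y :: "real^'n \<Rightarrow> real^'m"
  assumes T: "open T" and YT: "\<And>x. x \<in> S \<Longrightarrow> Y x \<in> T"
    and Ys: "\<And>j. smooth_on S (\<lambda>x. Y x $ j)" and f: "smooth_on T f"
  shows "smooth_on S (\<lambda>x. f (Y x))"
  by (rule alg_sound[OF T YT Ys alg.comp[OF f]])

lemma alg_id: "alg S (UNIV::(real^'n) set) (\<lambda>x::real^'n. x) g \<Longrightarrow> smooth_on S g"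
  by (rule alg_sound[of UNIV]) (auto intro: smooth_coord)

lemma smooth_add: "smooth_on S g \<Longrightarrow> smooth_on S h \<Longrightarrow> smooth_on S (\<lambda>x. g x + h x)"
  by (rule alg_id, rule alg.add; rule alg.base)

lemma smooth_mult: "smooth_on S g \<Longrightarrow> smooth_on S h \<Longrightarrow> smooth_on S (\<lambda>x. g x * h x)"
  by (rule alg_id, rule alg.mult; rule alg.base)

lemma smooth_inverse: "smooth_on S g \<Longrightarrow> (\<forall>x\<in>S. g x \<noteq> 0) \<Longrightarrow> smooth_on S (\<lambda>x. inverse (g x))"
  by (rule alg_id, rule alg.inv, rule alg.base)



lemma open_punct: "open (punct :: (real^'n) set)"
  by (simp add: open_Diff)

theorem proposition2:
  fixes nrm :: "real ^ 'n \<Rightarrow> real" and Y :: "real ^ 'n \<Rightarrow> real ^ 'n"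
  assumes "is_norm nrm"
    and "smooth_on punct nrm"
    and "Y \<in> TCT"
  shows "\<exists>!(h, gN). h \<in> TCT_H nrm \<and> gN \<in> TCT_N \<and> Y = h \<circ> gN"
proof -
  have n0: "\<And>x. nrm x = 0 \<longleftrightarrow> x = 0" and nsc: "\<And>c x. nrm (c *\<^sub>R x) = \<bar>c\<bar> * nrm x"
    using assms(1) by (auto simp: is_norm_def)
  have ns: "smooth_on punct nrm" by (rule assms(2))
  have Y0: "Y 0 = 0" and Ybij: "bij_betw Y punct punct" and Ysm: "smooth_map_on punct Y"
    and Yism: "smooth_map_on punct (inv_into punct Y)"
    and Yhom: "\<And>x lam. x \<noteq> 0 \<Longrightarrow> lam \<noteq> 0 \<Longrightarrow> Y (lam *\<^sub>R x) = lam *\<^sub>R Y x"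
    using assms(3) by (auto simp: TCT_def)
  define Yi where "Yi = inv_into punct Y"
  have YnZ: "\<And>x. x \<noteq> 0 \<Longrightarrow> Y x \<noteq> 0" using Ybij by (auto simp: bij_betw_def)
  have YiY: "\<And>x. x \<noteq> 0 \<Longrightarrow> Yi (Y x) = x"
    using Ybij by (simp add: Yi_def bij_betw_def inv_into_f_f)
  have YYi: "\<And>z. z \<noteq> 0 \<Longrightarrow> Y (Yi z) = z"
    using Ybij unfolding Yi_def by (meson DiffI UNIV_I bij_betw_inv_into_right singletonD)
  have YinZ: "\<And>z. z \<noteq> 0 \<Longrightarrow> Yi z \<noteq> 0"
    using YYi Y0 by metis
  have Ys: "\<And>j. smooth_on punct (\<lambda>x. Y x $ j)" using Ysm by (simp add: smooth_map_on_def)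
  have Yis: "\<And>j. smooth_on punct (\<lambda>x. Yi x $ j)" using Yism by (simp add: smooth_map_on_def Yi_def)
  have nnz: "\<And>x. x \<noteq> 0 \<Longrightarrow> nrm x > 0"
  proof -
    fix x :: "real^'n" assume "x \<noteq> 0"
    have tri: "nrm (x + (- x)) \<le> nrm x + nrm (- x)" using assms(1) unfolding is_norm_def by blast
    have "nrm (- x) = nrm x" using nsc[of "-1" x] by simp
    then have "0 \<le> 2 * nrm x" using tri n0[of 0] by simp
    then have "nrm x \<ge> 0" by simp
    then show "nrm x > 0" using n0 \<open>x \<noteq> 0\<close> by (simp add: order_le_less)
  qed
  define r where "r x = nrm (Y x) * inverse (nrm x)" for x
  have rpos: "\<And>x. x \<noteq> 0 \<Longrightarrow> r x > 0"
    using nnz YnZ by (simp add: r_def)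
  have rhom: "\<And>x lam. x \<noteq> 0 \<Longrightarrow> lam \<noteq> 0 \<Longrightarrow> r (lam *\<^sub>R x) = r x"
    using nnz by (simp add: r_def Yhom nsc)
  have rsm: "smooth_on punct r"
    unfolding r_def
    by (rule smooth_mult[OF smooth_comp[OF open_punct _ Ys ns] smooth_inverse[OF ns]])
       (use YnZ n0 in auto)
  define gg where "gg x = r x *\<^sub>R x" for x
  define gi where "gi y = inverse (r y) *\<^sub>R y" for y
  have rgg: "\<And>x. x \<noteq> 0 \<Longrightarrow> r (gg x) = r x"
    using rpos rhom by (simp add: gg_def less_le)
  have rgi: "\<And>y. y \<noteq> 0 \<Longrightarrow> r (gi y) = r y"
    using rpos rhom by (simp add: gi_def less_le)
  have ggnZ: "\<And>x. x \<noteq> 0 \<Longrightarrow> gg x \<noteq> 0" using rpos by (simp add: gg_def less_le)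
  have ginZ: "\<And>x. x \<noteq> 0 \<Longrightarrow> gi x \<noteq> 0" using rpos by (simp add: gi_def less_le)
  have gigg: "\<And>x. x \<noteq> 0 \<Longrightarrow> gi (gg x) = x"
    using rgg rpos by (simp add: gi_def) (simp add: gg_def less_le)
  have gggi: "\<And>y. y \<noteq> 0 \<Longrightarrow> gg (gi y) = y"
    using rgi rpos by (simp add: gg_def) (simp add: gi_def less_le)
  have ggbij: "bij_betw gg punct punct"
    by (rule bij_betw_byWitness[where f'=gi]) (use gigg gggi ggnZ ginZ in auto)
  have ggi: "\<And>y. y \<noteq> 0 \<Longrightarrow> inv_into punct gg y = gi y"
    by (rule inv_into_f_eq[OF bij_betw_imp_inj_on[OF ggbij]]) (use ginZ gggi in auto)
  have gg0: "gg 0 = 0" by (simp add: gg_def)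
  have ggTCT: "gg \<in> TCT"
    unfolding TCT_def
  proof (intro CollectI conjI gg0 ggbij allI impI)
    show "smooth_map_on punct gg"
      unfolding smooth_map_on_def gg_def by (auto intro!: smooth_mult rsm smooth_coord)
    show "smooth_map_on punct (inv_into punct gg)"
      unfolding smooth_map_on_def
    proof
      fix j
      show "smooth_on punct (\<lambda>x. inv_into punct gg x $ j)"
        by (rule smooth_cong[OF open_punct smooth_mult[OF smooth_inverse[OF rsm] smooth_coord]])
           (use ggi rpos in \<open>auto simp: gi_def less_le\<close>)
    qed
    fix x :: "real^'n" and lam :: real assume "x \<noteq> 0" "lam \<noteq> 0"
    then show "gg (lam *\<^sub>R x) = lam *\<^sub>R gg x" by (simp add: gg_def rhom)
  qed
  have ggN: "gg \<in> TCT_N"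
    unfolding TCT_N_def
    by (intro CollectI conjI ggTCT exI[of _ r] rsm allI impI rpos rhom) (auto simp: gg_def)
  define hh where "hh y = inverse (r y) *\<^sub>R Y y" for y
  define kk where "kk z = gg (Yi z)" for z
  have hhY: "\<And>y. y \<noteq> 0 \<Longrightarrow> hh y = Y (gi y)"
    using rpos by (simp add: hh_def gi_def Yhom less_le)
  have hh0: "hh 0 = 0" by (simp add: hh_def Y0)
  have hhnZ: "\<And>y. y \<noteq> 0 \<Longrightarrow> hh y \<noteq> 0" using hhY YnZ ginZ by simp
  have kknZ: "\<And>z. z \<noteq> 0 \<Longrightarrow> kk z \<noteq> 0" using YinZ ggnZ by (simp add: kk_def)
  have kkhh: "\<And>y. y \<noteq> 0 \<Longrightarrow> kk (hh y) = y"
    using hhY YiY ginZ gggi by (simp add: kk_def)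
  have hhkk: "\<And>z. z \<noteq> 0 \<Longrightarrow> hh (kk z) = z"
    using hhY kknZ YinZ gigg YYi by (simp add: kk_def)
  have hhbij: "bij_betw hh punct punct"
    by (rule bij_betw_byWitness[where f'=kk]) (use kkhh hhkk hhnZ kknZ in auto)
  have hhi: "\<And>z. z \<noteq> 0 \<Longrightarrow> inv_into punct hh z = kk z"
    by (rule inv_into_f_eq[OF bij_betw_imp_inj_on[OF hhbij]]) (use kknZ hhkk in auto)
  have hhTCT: "hh \<in> TCT"
    unfolding TCT_def
  proof (intro CollectI conjI hh0 hhbij allI impI)
    show "smooth_map_on punct hh"
      unfolding smooth_map_on_def hh_def using rpos by (auto intro!: smooth_mult smooth_inverse rsm Ys simp: less_le)
    show "smooth_map_on punct (inv_into punct hh)"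
      unfolding smooth_map_on_def
    proof
      fix j
      have "smooth_on punct (\<lambda>z. r (Yi z) * Yi z $ j)"
        by (rule smooth_mult[OF smooth_comp[OF open_punct _ Yis rsm] Yis]) (use YinZ in auto)
      then show "smooth_on punct (\<lambda>x. inv_into punct hh x $ j)"
        by (rule smooth_cong[OF open_punct]) (use hhi in \<open>auto simp: kk_def gg_def\<close>)
    qed
    fix x :: "real^'n" and lam :: real assume "x \<noteq> 0" "lam \<noteq> 0"
    then show "hh (lam *\<^sub>R x) = lam *\<^sub>R hh x" by (simp add: hh_def rhom Yhom)
  qed
  have hhH: "hh \<in> TCT_H nrm"
    unfolding TCT_H_def
  proof (intro CollectI conjI hhTCT allI impI)
    fix x :: "real^'n" assume x: "x \<noteq> 0"
    have "nrm (hh x) = inverse (r x) * nrm (Y x)"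
      using rpos[OF x] by (simp add: hh_def nsc)
    also have "\<dots> = nrm x"
      using nnz[OF x] nnz[OF YnZ[OF x]] by (simp add: r_def)
    finally show "nrm (hh x) = nrm x" .
    have "r (-x) = r x" using rhom[OF x, of "-1"] by simp
    moreover have "Y (-x) = - Y x" using Yhom[OF x, of "-1"] by simp
    ultimately show "hh (- x) = - hh x" by (simp add: hh_def)
  qed
  have Yeq: "Y = hh \<circ> gg"
  proof
    fix x :: "real^'n"
    show "Y x = (hh \<circ> gg) x"
    proof (cases "x = 0")
      case True then show ?thesis by (simp add: Y0 gg0 hh0)
    next
      case False
      then show ?thesis
        using rpos[OF False] rgg[OF False] by (simp add: hh_def gg_def Yhom less_le)
    qed
  qed
  show ?thesis
  proof (rule ex1I[of _ "(hh, gg)"])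
    show "case (hh, gg) of (h, gN) \<Rightarrow> h \<in> TCT_H nrm \<and> gN \<in> TCT_N \<and> Y = h \<circ> gN"
      using hhH ggN Yeq by simp
  next
    fix p assume p: "case p of (h, gN) \<Rightarrow> h \<in> TCT_H nrm \<and> gN \<in> TCT_N \<and> Y = h \<circ> gN"
    obtain h1 g1 where p12: "p = (h1, g1)" by (cases p)
    with p have h1: "h1 \<in> TCT_H nrm" and g1: "g1 \<in> TCT_N" and Y1: "Y = h1 \<circ> g1" by auto
    obtain r1 where r1pos: "\<And>x. x \<noteq> 0 \<Longrightarrow> r1 x > 0" and g1r: "\<And>x. x \<noteq> 0 \<Longrightarrow> g1 x = r1 x *\<^sub>R x"
      using g1 unfolding TCT_N_def by blast
    have g10: "g1 0 = 0" using g1 by (simp add: TCT_N_def TCT_def)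
    have h10: "h1 0 = 0" using h1 by (simp add: TCT_H_def TCT_def)
    have h1n: "\<And>x. x \<noteq> 0 \<Longrightarrow> nrm (h1 x) = nrm x" using h1 by (simp add: TCT_H_def)
    have "g1 x = gg x" for x
    proof (cases "x = 0")
      case True then show ?thesis by (simp add: g10 gg0)
    next
      case False
      have g1nz: "g1 x \<noteq> 0" using r1pos[OF False] False by (simp add: g1r[OF False])
      have "nrm (Y x) = nrm (g1 x)" using Y1 h1n[OF g1nz] by simp
      also have "\<dots> = r1 x * nrm x" using r1pos[OF False] by (simp add: g1r[OF False] nsc)
      finally have "r1 x = r x" using nnz[OF False] by (simp add: r_def)
      then show ?thesis using g1r[OF False] by (simp add: gg_def)
    qed
    then have g1eq: "g1 = gg" by auto
    have "h1 y = hh y" for y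
    proof (cases "y = 0")
      case True then show ?thesis by (simp add: h10 hh0)
    next
      case False
      have "h1 y = h1 (gg (gi y))" using gggi[OF False] by simp
      also have "\<dots> = Y (gi y)" using Y1 g1eq by simp
      also have "\<dots> = hh y" using hhY[OF False] by simp
      finally show ?thesis .
    qed
    then have "h1 = hh" by auto
    then show "p = (hh, gg)" using p12 g1eq by simp
  qed
qed


end
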